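(* Let $p,k$ be integers with $k\ge 2$ and $p\ge 2k$, and let $G=KG_{p,k}$ be the Kneser graph, with $n$ vertices and $m$ edges. Let $\mu_1\ge\cdots\ge\mu_n$ be the eigenvalues of the adjacency matrix of $G$, let $n^+$ be the number of positive eigenvalues, let $\omega=\omega(G)$ be the clique number of $G$, and let $\ell=\min(n^+,\omega)$. Then \[ \mu_1^2+\mu_2^2+\cdots+\mu_\ell^2\le \frac{2m(\omega-1)}{\omega}. \]
   Context: The Kneser graph $KG_{p,k}$ has as vertices the $k$-element subsets of a $p$-element set, two vertices being adjacent if and only if the corresponding subsets are disjoint. Eigenvalues are those of the adjacency matrix. *)

theory Defs
  imports "Jordan_Normal_Form.Char_Poly"
begin

definition kneser_verts :: "nat \<Rightarrow> nat \<Rightarrow> nat set set" where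
  "kneser_verts p k = {A. A \<subseteq> {0..<p} \<and> card A = k}"

text \<open>A fixed (arbitrary) enumeration of the vertices; spectra do not depend on it.\<close>
definition kneser_list :: "nat \<Rightarrow> nat \<Rightarrow> nat set list" where
  "kneser_list p k = (SOME vs. distinct vs \<and> set vs = kneser_verts p k)"

definition kneser_adj :: "nat \<Rightarrow> nat \<Rightarrow> real mat" where
  "kneser_adj p k = (let vs = kneser_list p k in
     mat (length vs) (length vs)
       (\<lambda>(i, j). if vs ! i \<inter> vs ! j = {} then 1 else 0))"

definition kneser_edges :: "nat \<Rightarrow> nat \<Rightarrow> nat" where
  "kneser_edges p k = card {{A, B} | A B. A \<in> kneser_verts p k \<and> B \<in> kneser_verts p k
                                 \<and> A \<noteq> B \<and> A \<inter> B = {}}"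

definition kneser_clique :: "nat \<Rightarrow> nat \<Rightarrow> nat set set \<Rightarrow> bool" where
  "kneser_clique p k C \<longleftrightarrow> C \<subseteq> kneser_verts p k \<and>
     (\<forall>A\<in>C. \<forall>B\<in>C. A \<noteq> B \<longrightarrow> A \<inter> B = {})"

definition kneser_clique_number :: "nat \<Rightarrow> nat \<Rightarrow> nat" where
  "kneser_clique_number p k = Max {card C | C. kneser_clique p k C}"

text \<open>Eigenvalues (with multiplicity) of a real matrix whose characteristic polynomial
  splits over the reals (e.g. a real symmetric matrix), listed in non-increasing order.\<close>
definition eigenvalues_desc :: "real mat \<Rightarrow> real list" where
  "eigenvalues_desc A = (THE mu. sorted_wrt (\<ge>) mu \<and>
       char_poly A = (\<Prod>x\<leftarrow>mu. [:- x, 1:]))"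

end

theory Submission
  imports Defs "Jordan_Normal_Form.Schur_Decomposition"
begin

lemma kv_finite[simp]: "finite (kneser_verts p k)"
proof -
  have "kneser_verts p k \<subseteq> Pow {0..<p}" unfolding kneser_verts_def by auto
  then show ?thesis by (rule finite_subset) auto
qed

lemma kv_card: "card (kneser_verts p k) = p choose k"
  unfolding kneser_verts_def using n_subsets[of "{0..<p}" k] by simp

lemma kv_mem: "B \<in> kneser_verts p k \<longleftrightarrow> B \<subseteq> {0..<p} \<and> card B = k"
  unfolding kneser_verts_def by simp

lemma kv_fin_el: "B \<in> kneser_verts p k \<Longrightarrow> finite B"
  unfolding kneser_verts_def using finite_subset[of B "{0..<p}"] by auto

lemma count_supsets:
  assumes "finite U" "S \<subseteq> U" "card S \<le> k"
  shows "card {C. C \<subseteq> U \<and> card C = k \<and> S \<subseteq> C} = (card U - card S) choose (k - card S)"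
proof -
  have fS: "finite S" using assms finite_subset by blast
  have "{C. C \<subseteq> U \<and> card C = k \<and> S \<subseteq> C} = (\<lambda>D. D \<union> S) ` {D. D \<subseteq> U - S \<and> card D = k - card S}"
  proof (rule equalityI[OF subsetI subsetI])
    fix C assume C: "C \<in> {C. C \<subseteq> U \<and> card C = k \<and> S \<subseteq> C}"
    have fC: "finite C" using C assms finite_subset by blast
    have "card (C - S) = k - card S" using C fS by (simp add: card_Diff_subset)
    then show "C \<in> (\<lambda>D. D \<union> S) ` {D. D \<subseteq> U - S \<and> card D = k - card S}"
      using C by (intro image_eqI[of _ _ "C - S"]) auto
  next
    fix C assume "C \<in> (\<lambda>D. D \<union> S) ` {D. D \<subseteq> U - S \<and> card D = k - card S}"
    then obtain D where D: "D \<subseteq> U - S" "card D = k - card S" "C = D \<union> S" by auto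
    have fD: "finite D" using D assms finite_subset by blast
    have "D \<inter> S = {}" using D by auto
    then have "card C = card D + card S" using D fD fS by (simp add: card_Un_disjoint)
    then show "C \<in> {C. C \<subseteq> U \<and> card C = k \<and> S \<subseteq> C}" using D assms by auto
  qed
  moreover have "inj_on (\<lambda>D. D \<union> S) {D. D \<subseteq> U - S \<and> card D = k - card S}"
    by (rule inj_onI) auto
  ultimately have "card {C. C \<subseteq> U \<and> card C = k \<and> S \<subseteq> C} = card {D. D \<subseteq> U - S \<and> card D = k - card S}"
    by (simp add: card_image)
  also have "\<dots> = card (U - S) choose (k - card S)"
    using n_subsets[of "U - S"] assms by simp
  also have "card (U - S) = card U - card S" using assms fS by (simp add: card_Diff_subset)
  finally show ?thesis .
qed

lemma alt_sum_pow:
  assumes "finite X"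
  shows "(\<Sum>T\<in>Pow X. (-1::'a::comm_ring_1) ^ card T) = (if X = {} then 1 else 0)"
  using assms
proof (induction X rule: finite_induct)
  case empty then show ?case by simp
next
  case (insert x F)
  have "(\<Sum>T\<in>Pow (insert x F). (-1::'a) ^ card T) =
        (\<Sum>T\<in>Pow F. (-1::'a) ^ card T) + (\<Sum>T\<in>insert x ` Pow F. (-1::'a) ^ card T)"
    unfolding Pow_insert
    by (rule sum.union_disjoint) (use insert in auto)
  also have "(\<Sum>T\<in>insert x ` Pow F. (-1::'a) ^ card T) = (\<Sum>T\<in>Pow F. (-1::'a) ^ card (insert x T))"
    by (rule sum.reindex_cong[where l = "insert x"]) (use insert in \<open>auto simp: inj_on_def\<close>)
  also have "\<dots> = (\<Sum>T\<in>Pow F. - ((-1::'a) ^ card T))"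
  proof (rule sum.cong[OF refl])
    fix T assume "T \<in> Pow F"
    then have "finite T" "x \<notin> T" using insert finite_subset by auto
    then show "(-1::'a) ^ card (insert x T) = - ((-1) ^ card T)" by simp
  qed
  finally show ?case by (simp add: sum_negf)
qed

section \<open>Function-level operators\<close>

definition wS :: "nat \<Rightarrow> nat \<Rightarrow> nat set \<Rightarrow> nat set \<Rightarrow> 'a::field_char_0" where
  "wS p k S B = (if B \<in> kneser_verts p k \<and> S \<subseteq> B then 1 else 0)"

definition Aop :: "nat \<Rightarrow> nat \<Rightarrow> (nat set \<Rightarrow> 'a::field_char_0) \<Rightarrow> nat set \<Rightarrow> 'a" where
  "Aop p k f B = (if B \<in> kneser_verts p k then
      (\<Sum>C\<in>kneser_verts p k. if B \<inter> C = {} then f C else 0) else 0)"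

definition Sop :: "nat \<Rightarrow> nat \<Rightarrow> 'a \<Rightarrow> (nat set \<Rightarrow> 'a::field_char_0) \<Rightarrow> nat set \<Rightarrow> 'a" where
  "Sop p k th f = (\<lambda>B. Aop p k f B - th * f B)"

definition theta :: "nat \<Rightarrow> nat \<Rightarrow> nat \<Rightarrow> 'a::field_char_0" where
  "theta p k j = (-1) ^ j * of_nat ((p - k - j) choose (k - j))"

inductive_set Vsp :: "nat \<Rightarrow> nat \<Rightarrow> nat \<Rightarrow> (nat set \<Rightarrow> 'a::field_char_0) set" for p k a where
  zero: "(\<lambda>_. 0) \<in> Vsp p k a"
| gen: "S \<subseteq> {0..<p} \<Longrightarrow> card S < a \<Longrightarrow> wS p k S \<in> Vsp p k a"
| add: "f \<in> Vsp p k a \<Longrightarrow> g \<in> Vsp p k a \<Longrightarrow> (\<lambda>B. f B + g B) \<in> Vsp p k a"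
| smult: "f \<in> Vsp p k a \<Longrightarrow> (\<lambda>B. c * f B) \<in> Vsp p k a"

lemma Vsp_mono: "f \<in> Vsp p k a \<Longrightarrow> a \<le> b \<Longrightarrow> f \<in> Vsp p k b"
  by (induction rule: Vsp.induct) (auto intro: Vsp.intros)

lemma Vsp_sum: "finite I \<Longrightarrow> (\<And>i. i \<in> I \<Longrightarrow> f i \<in> Vsp p k a) \<Longrightarrow> (\<lambda>B. \<Sum>i\<in>I. f i B) \<in> Vsp p k a"
proof (induction I rule: finite_induct)
  case empty then show ?case by (simp add: Vsp.zero)
next
  case (insert x F)
  then show ?case by (simp add: Vsp.add)
qed

lemma Vsp_diff: "f \<in> Vsp p k a \<Longrightarrow> g \<in> Vsp p k a \<Longrightarrow> (\<lambda>B. f B - g B) \<in> Vsp p k a"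
proof -
  assume f: "f \<in> Vsp p k a" and g: "g \<in> Vsp p k a"
  have "(\<lambda>B. f B + (-1) * g B) \<in> Vsp p k a" by (intro Vsp.add Vsp.smult f g)
  then show ?thesis by simp
qed

lemma Vsp_0: "f \<in> Vsp p k 0 \<Longrightarrow> f = (\<lambda>_. 0)"
  by (induction rule: Vsp.induct) auto

lemma Vsp_1: "f \<in> Vsp p k 1 \<Longrightarrow> \<exists>c. \<forall>B\<in>kneser_verts p k. f B = c"
proof (induction rule: Vsp.induct)
  case zero then show ?case by auto
next
  case (gen S)
  then have "finite S" using finite_subset by blast
  then have "S = {}" using gen by simp
  then show ?case by (auto simp: wS_def)
next
  case (add f g) then show ?case by fastforce
next
  case (smult f c) then show ?case by fastforce
qed

lemma Aop_add: "Aop p k (\<lambda>B. f B + g B) = (\<lambda>B. Aop p k f B + Aop p k g B)"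
proof
  fix B
  have "(\<Sum>C\<in>kneser_verts p k. if B \<inter> C = {} then f C + g C else 0) =
        (\<Sum>C\<in>kneser_verts p k. (if B \<inter> C = {} then f C else 0) + (if B \<inter> C = {} then g C else 0))"
    by (rule sum.cong) simp_all
  also have "\<dots> = (\<Sum>C\<in>kneser_verts p k. if B \<inter> C = {} then f C else 0) + (\<Sum>C\<in>kneser_verts p k. if B \<inter> C = {} then g C else 0)"
    by (rule sum.distrib)
  finally show "Aop p k (\<lambda>B. f B + g B) B = Aop p k f B + Aop p k g B"
    unfolding Aop_def by simp
qed

lemma Aop_smult: "Aop p k (\<lambda>B. c * f B) = (\<lambda>B. c * Aop p k f B)"
proof
  fix B
  have "(\<Sum>C\<in>kneser_verts p k. if B \<inter> C = {} then c * f C else 0) =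
        (\<Sum>C\<in>kneser_verts p k. c * (if B \<inter> C = {} then f C else 0))"
    by (rule sum.cong) simp_all
  also have "\<dots> = c * (\<Sum>C\<in>kneser_verts p k. if B \<inter> C = {} then f C else 0)"
    by (rule sum_distrib_left[symmetric])
  finally show "Aop p k (\<lambda>B. c * f B) B = c * Aop p k f B"
    unfolding Aop_def by simp
qed

lemma Aop_zero: "Aop p k (\<lambda>_. 0) = (\<lambda>_. 0)"
  unfolding Aop_def by auto

lemma wS_big: "card S > k \<Longrightarrow> finite S \<Longrightarrow> wS p k S = (\<lambda>_. 0)"
proof
  fix B assume "card S > k" "finite S"
  show "wS p k S B = 0"
  proof (cases "B \<in> kneser_verts p k \<and> S \<subseteq> B")
    case True
    then have "card S \<le> card B" using kv_fin_el card_mono by blast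
    then show ?thesis using True \<open>card S > k\<close> by (simp add: kv_mem)
  qed (auto simp: wS_def)
qed

lemma ie_indicator:
  assumes "finite S" "B \<in> kneser_verts p k"
  shows "(\<Sum>T\<in>Pow S. (-1::'a::field_char_0) ^ card T * wS p k T B) = (if S \<inter> B = {} then 1 else 0)"
proof -
  have "(\<Sum>T\<in>Pow S. (-1::'a) ^ card T * wS p k T B) = (\<Sum>T\<in>{T\<in>Pow S. T \<subseteq> B}. (-1::'a) ^ card T)"
    using assms by (simp add: wS_def sum.inter_filter[symmetric] if_distrib cong: if_cong)
  also have "{T\<in>Pow S. T \<subseteq> B} = Pow (S \<inter> B)" by auto
  also have "(\<Sum>T\<in>Pow (S \<inter> B). (-1::'a) ^ card T) = (if S \<inter> B = {} then 1 else 0)"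
    using assms by (intro alt_sum_pow) auto
  finally show ?thesis .
qed

lemma Aop_wS_val:
  assumes S: "S \<subseteq> {0..<p}" "card S \<le> k" and B: "B \<in> kneser_verts p k"
  shows "Aop p k (wS p k S) B = (if S \<inter> B = {} then of_nat ((p - k - card S) choose (k - card S)) else (0::'a::field_char_0))"
proof -
  have "Aop p k (wS p k S) B = (\<Sum>C\<in>kneser_verts p k. if B \<inter> C = {} \<and> S \<subseteq> C then (1::'a) else 0)"
    using B unfolding Aop_def wS_def by (auto intro!: sum.cong)
  also have "\<dots> = of_nat (card {C\<in>kneser_verts p k. B \<inter> C = {} \<and> S \<subseteq> C})"
    by (simp add: sum.If_cases Int_def)
  also have "{C\<in>kneser_verts p k. B \<inter> C = {} \<and> S \<subseteq> C} = 
      (if S \<inter> B = {} then {C. C \<subseteq> {0..<p} - B \<and> card C = k \<and> S \<subseteq> C} else {})"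
    by (auto simp: kv_mem)
  finally have eq: "Aop p k (wS p k S) B = (of_nat :: nat \<Rightarrow> 'a) (card (if S \<inter> B = {} then {C. C \<subseteq> {0..<p} - B \<and> card C = k \<and> S \<subseteq> C} else {}))" .
  show ?thesis
  proof (cases "S \<inter> B = {}")
    case True
    have Bs: "B \<subseteq> {0..<p}" "card B = k" using B kv_mem by auto
    have cU: "card ({0..<p} - B) = p - k" using Bs by (simp add: card_Diff_subset finite_subset)
    have "card {C. C \<subseteq> {0..<p} - B \<and> card C = k \<and> S \<subseteq> C} = (card ({0..<p} - B) - card S) choose (k - card S)"
      by (rule count_supsets) (use S True in auto)
    then show ?thesis using eq True cU by simp
  next
    case False then show ?thesis using eq by simp
  qed
qed

lemma Aop_wS:
  assumes S: "S \<subseteq> {0..<p}" "card S \<le> k"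
  shows "Aop p k (wS p k S) = (\<lambda>B. of_nat ((p - k - card S) choose (k - card S)) *
            (\<Sum>T\<in>Pow S. (-1::'a::field_char_0) ^ card T * wS p k T B))"
proof
  fix B
  have fS: "finite S" using S finite_subset by blast
  show "Aop p k (wS p k S) B = of_nat ((p - k - card S) choose (k - card S)) *
            (\<Sum>T\<in>Pow S. (-1::'a) ^ card T * wS p k T B)"
  proof (cases "B \<in> kneser_verts p k")
    case True
    show ?thesis unfolding Aop_wS_val[OF S True] ie_indicator[OF fS True] by simp
  next
    case False
    then show ?thesis by (simp add: Aop_def wS_def)
  qed
qed

lemma Aop_Vsp: 
  fixes f :: "nat set \<Rightarrow> 'a::field_char_0"
  shows "f \<in> Vsp p k a \<Longrightarrow> Aop p k f \<in> Vsp p k a"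
proof (induction rule: Vsp.induct)
  case zero then show ?case by (simp add: Aop_zero Vsp.zero)
next
  case (gen S)
  have fS: "finite S" using gen finite_subset by blast
  show ?case
  proof (cases "card S \<le> k")
    case True
    have "(\<lambda>B. \<Sum>T\<in>Pow S. (-1::'a) ^ card T * wS p k T B) \<in> Vsp p k a"
    proof (rule Vsp_sum)
      fix T assume T: "T \<in> Pow S"
      have "card T \<le> card S" using T fS card_mono by blast
      then have "wS p k T \<in> Vsp p k a" using T gen by (intro Vsp.gen) auto
      then show "(\<lambda>B. (-1::'a) ^ card T * wS p k T B) \<in> Vsp p k a" by (rule Vsp.smult)
    qed (use fS in auto)
    then show ?thesis unfolding Aop_wS[OF gen(1) True] by (rule Vsp.smult)
  next
    case False
    then have "wS p k S = (\<lambda>_. 0::'a)" using wS_big[OF _ fS, of k p] by simp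
    then show ?thesis by (simp add: Aop_zero Vsp.zero)
  qed
next
  case (add f g) then show ?case by (simp add: Aop_add Vsp.add)
next
  case (smult f c) then show ?case by (simp add: Aop_smult Vsp.smult)
qed

lemma Sop_step:
  assumes "f \<in> Vsp p k (Suc j)" "j \<le> k"
  shows "Sop p k (theta p k j) f \<in> Vsp p k j"
  using assms(1)
proof (induction rule: Vsp.induct)
  case zero then show ?case by (simp add: Sop_def Aop_zero Vsp.zero)
next
  case (gen S)
  have fS: "finite S" using gen finite_subset by blast
  show ?case
  proof (cases "card S = j")
    case True
    have ck: "card S \<le> k" using True assms by simp
    have split: "(\<Sum>T\<in>Pow S. (-1::'a) ^ card T * wS p k T B) =
          (-1) ^ card S * wS p k S B + (\<Sum>T\<in>Pow S - {S}. (-1::'a) ^ card T * wS p k T B)" for B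
      using fS by (subst sum.remove[of _ S]) auto
    have "Sop p k (theta p k j) (wS p k S) = (\<lambda>B. of_nat ((p - k - card S) choose (k - card S)) *
            (\<Sum>T\<in>Pow S - {S}. (-1::'a) ^ card T * wS p k T B))"
      unfolding Sop_def Aop_wS[OF gen(1) ck] split theta_def True[symmetric]
      by (auto simp: algebra_simps)
    also have "\<dots> \<in> Vsp p k j"
    proof (rule Vsp.smult, rule Vsp_sum)
      fix T assume T: "T \<in> Pow S - {S}"
      then have "T \<subset> S" by auto
      then have "card T < card S" using fS psubset_card_mono by blast
      then have "wS p k T \<in> Vsp p k j" using T gen True by (intro Vsp.gen) auto
      then show "(\<lambda>B. (-1::'a) ^ card T * wS p k T B) \<in> Vsp p k j" by (rule Vsp.smult)
    qed (use fS in auto)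
    finally show ?thesis .
  next
    case False
    then have "card S < j" using gen by simp
    then have w: "wS p k S \<in> Vsp p k j" using gen by (intro Vsp.gen) auto
    show ?thesis unfolding Sop_def
      by (intro Vsp_diff Aop_Vsp w Vsp.smult)
  qed
next
  case (add f g)
  have "Sop p k (theta p k j) (\<lambda>B. f B + g B) = (\<lambda>B. Sop p k (theta p k j) f B + Sop p k (theta p k j) g B)"
    unfolding Sop_def Aop_add by (auto simp: algebra_simps)
  then show ?case using add by (simp add: Vsp.add)
next
  case (smult f c)
  have "Sop p k (theta p k j) (\<lambda>B. c * f B) = (\<lambda>B. c * Sop p k (theta p k j) f B)"
    unfolding Sop_def Aop_smult by (auto simp: algebra_simps)
  then show ?case using smult by (simp add: Vsp.smult)
qed

fun Pop :: "nat \<Rightarrow> nat \<Rightarrow> 'a list \<Rightarrow> (nat set \<Rightarrow> 'a::field_char_0) \<Rightarrow> nat set \<Rightarrow> 'a" where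
  "Pop p k [] f = f"
| "Pop p k (th # ths) f = Sop p k th (Pop p k ths f)"

lemma Pop_append: "Pop p k (xs @ ys) f = Pop p k xs (Pop p k ys f)"
  by (induction xs) auto

lemma Pop_main:
  assumes "a \<le> j" "j \<le> Suc k" "f \<in> Vsp p k j"
  shows "Pop p k (map (theta p k) [a..<j]) f \<in> Vsp p k a"
  using assms
proof (induction j arbitrary: f)
  case 0 then show ?case by simp
next
  case (Suc j)
  show ?case
  proof (cases "a = Suc j")
    case True then show ?thesis using Suc by simp
  next
    case False
    then have aj: "a \<le> j" using Suc by simp
    have "Sop p k (theta p k j) f \<in> Vsp p k j" using Suc by (intro Sop_step) auto
    then have "Pop p k (map (theta p k) [a..<j]) (Sop p k (theta p k j) f) \<in> Vsp p k a"
      using Suc aj by auto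
    then show ?thesis using aj by (simp add: Pop_append)
  qed
qed

lemma Pop_eigen:
  assumes "Aop p k f = (\<lambda>B. c * f B)"
  shows "Pop p k ths f = (\<lambda>B. (\<Prod>th\<leftarrow>ths. (c - th)) * f B)"
proof (induction ths)
  case Nil then show ?case by simp
next
  case (Cons th ths)
  show ?case unfolding Pop.simps Cons Sop_def Aop_smult assms
    by (rule ext) (simp add: algebra_simps)
qed

lemma wS_on_verts:
  assumes "B \<in> kneser_verts p k" "C \<in> kneser_verts p k"
  shows "wS p k B C = (if B = C then 1 else 0)"
proof -
  have "B \<subseteq> C \<Longrightarrow> B = C" using assms kv_fin_el card_subset_eq kv_mem by metis
  then show ?thesis using assms by (auto simp: wS_def)
qed

lemma vanish_in_Vsp:
  assumes "\<And>B. B \<notin> kneser_verts p k \<Longrightarrow> f B = 0"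
  shows "f \<in> Vsp p k (Suc k)"
proof -
  have "f = (\<lambda>C. \<Sum>B\<in>kneser_verts p k. f B * wS p k B C)"
  proof
    fix C show "f C = (\<Sum>B\<in>kneser_verts p k. f B * wS p k B C)"
    proof (cases "C \<in> kneser_verts p k")
      case True
      then have "(\<Sum>B\<in>kneser_verts p k. f B * wS p k B C) = (\<Sum>B\<in>kneser_verts p k. if B = C then f B else 0)"
        by (intro sum.cong) (auto simp: wS_on_verts)
      then show ?thesis using True by simp
    next
      case False then show ?thesis using assms by (simp add: wS_def)
    qed
  qed
  also have "\<dots> \<in> Vsp p k (Suc k)"
  proof (rule Vsp_sum)
    fix B assume "B \<in> kneser_verts p k"
    then have "wS p k B \<in> Vsp p k (Suc k)" by (intro Vsp.gen) (auto simp: kv_mem)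
    then have "(\<lambda>C. f B * wS p k B C) \<in> Vsp p k (Suc k)" by (rule Vsp.smult)
    then show "(\<lambda>C. f B * wS p k B C) \<in> Vsp p k (Suc k)" .
  qed simp
  finally show ?thesis .
qed

lemma Pop_annih:
  assumes "\<And>B. B \<notin> kneser_verts p k \<Longrightarrow> f B = 0"
  shows "Pop p k (map (theta p k) [0..<Suc k]) f = (\<lambda>_. 0)"
  using Pop_main[where a=0 and j="Suc k" and f=f and p=p and k=k] vanish_in_Vsp[OF assms] Vsp_0 by auto

lemma Pop_rank1:
  assumes "\<And>B. B \<notin> kneser_verts p k \<Longrightarrow> f B = 0"
  shows "\<exists>c. \<forall>B\<in>kneser_verts p k. Pop p k (map (theta p k) [1..<Suc k]) f B = c"
  using Pop_main[where a=1 and j="Suc k" and f=f and p=p and k=k] vanish_in_Vsp[OF assms] Vsp_1 by auto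

definition ind :: "nat \<Rightarrow> nat \<Rightarrow> nat set \<Rightarrow> 'a::field_char_0" where
  "ind p k B = (if B \<in> kneser_verts p k then 1 else 0)"

lemma Aop_ind: "k \<le> p - k \<Longrightarrow> Aop p k (ind p k) = (\<lambda>B. of_nat ((p - k) choose k) * ind p k B)"
proof
  fix B
  assume kp: "k \<le> p - k"
  have "ind p k = (wS p k {} :: nat set \<Rightarrow> 'a)" by (auto simp: ind_def wS_def)
  show "Aop p k (ind p k) B = of_nat ((p - k) choose k) * (ind p k B :: 'a)"
  proof (cases "B \<in> kneser_verts p k")
    case True
    have "Aop p k (ind p k) B = (Aop p k (wS p k {}) B :: 'a)" using \<open>ind p k = wS p k {}\<close> by simp
    also have "\<dots> = of_nat ((p - k) choose k)" using Aop_wS_val[of "{}" p k B] True by simp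
    finally show ?thesis using True by (simp add: ind_def)
  qed (simp add: Aop_def ind_def)
qed

lemma kl_props: "distinct (kneser_list p k) \<and> set (kneser_list p k) = kneser_verts p k"
proof -
  have "\<exists>vs. distinct vs \<and> set vs = kneser_verts p k"
    using finite_distinct_list[OF kv_finite] by blast
  then show ?thesis unfolding kneser_list_def by (rule someI_ex)
qed

lemma kl_len: "length (kneser_list p k) = p choose k"
  using kl_props distinct_card kv_card by metis

lemma kl_mem: "i < length (kneser_list p k) \<Longrightarrow> kneser_list p k ! i \<in> kneser_verts p k"
  using kl_props nth_mem by metis

definition kmat :: "nat \<Rightarrow> nat \<Rightarrow> 'a::field_char_0 mat" where
  "kmat p k = mat (length (kneser_list p k)) (length (kneser_list p k))
     (\<lambda>(i, j). if kneser_list p k ! i \<inter> kneser_list p k ! j = {} then 1 else 0)"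

lemma kneser_adj_kmat: "kneser_adj p k = kmat p k"
  unfolding kneser_adj_def kmat_def Let_def ..

lemma kmat_carrier: "kmat p k \<in> carrier_mat (length (kneser_list p k)) (length (kneser_list p k))"
  unfolding kmat_def by simp

definition vecf :: "nat \<Rightarrow> nat \<Rightarrow> (nat set \<Rightarrow> 'a) \<Rightarrow> 'a vec" where
  "vecf p k f = vec (length (kneser_list p k)) (\<lambda>i. f (kneser_list p k ! i))"

lemma vecf_carrier[simp]: "vecf p k f \<in> carrier_vec (length (kneser_list p k))"
  unfolding vecf_def by simp

lemma vecf_dim[simp]: "dim_vec (vecf p k f) = length (kneser_list p k)"
  unfolding vecf_def by simp

lemma vecf_index[simp]: "i < length (kneser_list p k) \<Longrightarrow> vecf p k f $ i = f (kneser_list p k ! i)"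
  unfolding vecf_def by simp

lemma sum_nth_distinct: "distinct xs \<Longrightarrow> (\<Sum>j\<in>{0..<length xs}. h (xs ! j)) = (\<Sum>x\<in>set xs. h x)"
  by (simp add: sum.distinct_set_conv_list sum_list_sum_nth)

lemma kmat_vecf: "kmat p k *\<^sub>v vecf p k f = vecf p k (Aop p k f)"
proof (rule eq_vecI)
  let ?vs = "kneser_list p k"
  fix i assume i: "i < dim_vec (vecf p k (Aop p k f))"
  then have i': "i < length ?vs" by simp
  have "(kmat p k *\<^sub>v vecf p k f) $ i = (\<Sum>j\<in>{0..<length ?vs}. (if ?vs!i \<inter> ?vs!j = {} then f (?vs!j) else 0))"
    using i' by (auto simp: kmat_def scalar_prod_def intro!: sum.cong)
  also have "\<dots> = (\<Sum>C\<in>kneser_verts p k. if ?vs!i \<inter> C = {} then f C else 0)"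
    using sum_nth_distinct[of ?vs "\<lambda>C. if ?vs!i \<inter> C = {} then f C else 0"] kl_props by simp
  also have "\<dots> = Aop p k f (?vs!i)" using kl_mem[OF i'] by (simp add: Aop_def)
  finally show "(kmat p k *\<^sub>v vecf p k f) $ i = vecf p k (Aop p k f) $ i" using i' by simp
qed (simp add: kmat_def)

fun Pm :: "'a::comm_ring_1 mat \<Rightarrow> 'a list \<Rightarrow> 'a mat" where
  "Pm A [] = 1\<^sub>m (dim_row A)"
| "Pm A (th # ths) = (A - th \<cdot>\<^sub>m 1\<^sub>m (dim_row A)) * Pm A ths"

lemma Pm_carrier: "A \<in> carrier_mat n n \<Longrightarrow> Pm A ths \<in> carrier_mat n n"
  by (induction ths) auto

lemma smult_one_mult_vec:
  fixes v :: "'a::comm_ring_1 vec"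
  assumes "v \<in> carrier_vec n"
  shows "(c \<cdot>\<^sub>m 1\<^sub>m n) *\<^sub>v v = c \<cdot>\<^sub>v v"
proof (rule eq_vecI)
  fix i assume "i < dim_vec (c \<cdot>\<^sub>v v)"
  then have i: "i < n" using assms by simp
  have "((c \<cdot>\<^sub>m 1\<^sub>m n) *\<^sub>v v) $ i = (\<Sum>j\<in>{0..<n}. (if i = j then c else 0) * v $ j)"
    using i assms by (auto simp: scalar_prod_def intro!: sum.cong)
  also have "\<dots> = (\<Sum>j\<in>{0..<n}. if i = j then c * v $ j else 0)" by (rule sum.cong) auto
  also have "\<dots> = c * v $ i" using i by simp
  finally show "((c \<cdot>\<^sub>m 1\<^sub>m n) *\<^sub>v v) $ i = (c \<cdot>\<^sub>v v) $ i" using i assms by simp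
qed (use assms in simp)

lemma Pm_vecf: "Pm (kmat p k) ths *\<^sub>v vecf p k f = vecf p k (Pop p k ths f)"
proof (induction ths)
  case Nil
  have "dim_row (kmat p k :: 'a mat) = length (kneser_list p k)" by (simp add: kmat_def)
  then show ?case by simp
next
  case (Cons th ths)
  let ?N = "length (kneser_list p k)"
  let ?A = "kmat p k :: 'a mat"
  have A: "?A \<in> carrier_mat ?N ?N" by (rule kmat_carrier)
  then have dA: "dim_row ?A = ?N" by simp
  have P: "Pm ?A ths \<in> carrier_mat ?N ?N" using A by (rule Pm_carrier)
  have "Pm ?A (th # ths) *\<^sub>v vecf p k f = (?A - th \<cdot>\<^sub>m 1\<^sub>m ?N) *\<^sub>v (Pm ?A ths *\<^sub>v vecf p k f)"
    unfolding Pm.simps dA using A P by (intro assoc_mult_mat_vec) auto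
  also have "\<dots> = (?A - th \<cdot>\<^sub>m 1\<^sub>m ?N) *\<^sub>v vecf p k (Pop p k ths f)" using Cons by simp
  also have "\<dots> = ?A *\<^sub>v vecf p k (Pop p k ths f) - (th \<cdot>\<^sub>m 1\<^sub>m ?N) *\<^sub>v vecf p k (Pop p k ths f)"
    using A by (intro minus_mult_distrib_mat_vec) auto
  also have "\<dots> = vecf p k (Sop p k th (Pop p k ths f))"
    unfolding kmat_vecf smult_one_mult_vec[OF vecf_carrier]
    by (rule eq_vecI) (auto simp: Sop_def)
  finally show ?case by simp
qed

section \<open>Traces and Schur\<close>

definition mtr :: "'a::comm_ring_1 mat \<Rightarrow> 'a" where
  "mtr M = (\<Sum>i<dim_row M. M $$ (i, i))"

lemma mtr_comm:
  fixes A B :: "'a::comm_ring_1 mat"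
  assumes "A \<in> carrier_mat n m" "B \<in> carrier_mat m n"
  shows "mtr (A * B) = mtr (B * A)"
proof -
  have "mtr (A * B) = (\<Sum>i<n. \<Sum>j<m. A $$ (i, j) * B $$ (j, i))"
    using assms by (simp add: mtr_def scalar_prod_def atLeast0LessThan)
  also have "\<dots> = (\<Sum>j<m. \<Sum>i<n. B $$ (j, i) * A $$ (i, j))"
    by (subst sum.swap) (simp add: mult.commute)
  also have "\<dots> = mtr (B * A)"
    using assms by (simp add: mtr_def scalar_prod_def atLeast0LessThan)
  finally show ?thesis .
qed

lemma ut_mult:
  fixes X Y :: "'a::comm_ring_1 mat"
  assumes X: "X \<in> carrier_mat n n" and Y: "Y \<in> carrier_mat n n"
    and uX: "upper_triangular X" and uY: "upper_triangular Y"
  shows "upper_triangular (X * Y)" "\<And>i. i < n \<Longrightarrow> (X * Y) $$ (i, i) = X $$ (i, i) * Y $$ (i, i)"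
proof -
  show "upper_triangular (X * Y)"
  proof (rule upper_triangularI)
    fix i j assume ji: "j < i" and i: "i < dim_row (X * Y)"
    then have i': "i < n" using X by simp
    have "(X * Y) $$ (i, j) = (\<Sum>l\<in>{0..<n}. X $$ (i, l) * Y $$ (l, j))"
      using X Y i' ji by (simp add: scalar_prod_def)
    also have "\<dots> = 0"
    proof (rule sum.neutral, rule ballI)
      fix l assume l: "l \<in> {0..<n}"
      show "X $$ (i, l) * Y $$ (l, j) = 0"
      proof (cases "l < i")
        case True then have "X $$ (i, l) = 0" using uX i' X upper_triangularD by (metis carrier_matD(1))
        then show ?thesis by simp
      next
        case False then have "j < l" using ji by simp
        then have "Y $$ (l, j) = 0" using uY l Y upper_triangularD by (metis atLeastLessThan_iff carrier_matD(1))
        then show ?thesis by simp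
      qed
    qed
    finally show "(X * Y) $$ (i, j) = 0" .
  qed
  fix i assume i: "i < n"
  have "(X * Y) $$ (i, i) = (\<Sum>l\<in>{0..<n}. X $$ (i, l) * Y $$ (l, i))"
    using X Y i by (simp add: scalar_prod_def)
  also have "\<dots> = (\<Sum>l\<in>{0..<n}. if l = i then X $$ (i, i) * Y $$ (i, i) else 0)"
  proof (rule sum.cong[OF refl])
    fix l assume l: "l \<in> {0..<n}"
    show "X $$ (i, l) * Y $$ (l, i) = (if l = i then X $$ (i, i) * Y $$ (i, i) else 0)"
    proof (cases "l < i")
      case True then have "X $$ (i, l) = 0" using uX i X upper_triangularD by (metis carrier_matD(1))
      then show ?thesis using True by simp
    next
      case False
      show ?thesis
      proof (cases "l = i")
        case False
        then have "i < l" using \<open>\<not> l < i\<close> by simp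
        then have "Y $$ (l, i) = 0" using uY l Y upper_triangularD by (metis atLeastLessThan_iff carrier_matD(1))
        then show ?thesis using False by simp
      qed simp
    qed
  qed
  also have "\<dots> = X $$ (i, i) * Y $$ (i, i)" using i by simp
  finally show "(X * Y) $$ (i, i) = X $$ (i, i) * Y $$ (i, i)" .
qed

lemma Pm_ut:
  fixes B :: "'a::comm_ring_1 mat"
  assumes B: "B \<in> carrier_mat n n" and uB: "upper_triangular B"
  shows "upper_triangular (Pm B ths) \<and> (\<forall>i<n. Pm B ths $$ (i, i) = (\<Prod>th\<leftarrow>ths. B $$ (i, i) - th))"
proof (induction ths)
  case Nil then show ?case using B by auto
next
  case (Cons th ths)
  have dB: "dim_row B = n" using B by simp
  let ?X = "B - th \<cdot>\<^sub>m 1\<^sub>m n"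
  have X: "?X \<in> carrier_mat n n" by (intro minus_carrier_mat smult_carrier_mat one_carrier_mat)
  have "\<And>i j. j < i \<Longrightarrow> i < n \<Longrightarrow> B $$ (i, j) = 0" using uB B upper_triangularD by (metis carrier_matD(1))
  then have uX: "upper_triangular ?X" using B by (auto intro!: upper_triangularI)
  have dX: "\<And>i. i < n \<Longrightarrow> ?X $$ (i, i) = B $$ (i, i) - th" using B by simp
  have P: "Pm B ths \<in> carrier_mat n n" using B by (rule Pm_carrier)
  show ?case unfolding Pm.simps dB using ut_mult[OF X P uX] Cons dX by simp
qed

lemma sim_Pm:
  fixes A :: "'a::comm_ring_1 mat"
  assumes wit: "similar_mat_wit A B P Q" and A: "A \<in> carrier_mat n n"
  shows "Pm A ths = P * Pm B ths * Q"
proof -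
  from similar_mat_witD2[OF A wit] have
    B: "B \<in> carrier_mat n n" and P: "P \<in> carrier_mat n n" and Q: "Q \<in> carrier_mat n n"
    and PQ: "P * Q = 1\<^sub>m n" and QP: "Q * P = 1\<^sub>m n" and AB: "A = P * B * Q"
    by auto
  have dA: "dim_row A = n" "dim_row B = n" using A B by auto
  show ?thesis
  proof (induction ths)
    case Nil then show ?case using dA PQ P Q by simp
  next
    case (Cons th ths)
    define C where "C = Pm B ths"
    have C: "C \<in> carrier_mat n n" unfolding C_def using B by (rule Pm_carrier)
    have e1: "A - th \<cdot>\<^sub>m 1\<^sub>m n = P * (B - th \<cdot>\<^sub>m 1\<^sub>m n) * Q"
    proof -
      have "P * (B - th \<cdot>\<^sub>m 1\<^sub>m n) * Q = (P * B - P * (th \<cdot>\<^sub>m 1\<^sub>m n)) * Q"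
        using P B by (simp add: mult_minus_distrib_mat[of _ n n _ n])
      also have "\<dots> = P * B * Q - P * (th \<cdot>\<^sub>m 1\<^sub>m n) * Q"
        using P B Q by (simp add: minus_mult_distrib_mat[of _ n n _ _ n])
      also have "P * (th \<cdot>\<^sub>m 1\<^sub>m n) * Q = th \<cdot>\<^sub>m 1\<^sub>m n"
        using P Q PQ by (simp add: mult_smult_distrib[of _ n n _ n] mult_smult_assoc_mat[of _ n n _ n])
      finally show ?thesis using AB by simp
    qed
    define X where "X = B - th \<cdot>\<^sub>m 1\<^sub>m n"
    have X: "X \<in> carrier_mat n n" unfolding X_def by (intro minus_carrier_mat smult_carrier_mat one_carrier_mat)
    have QPZ: "\<And>Z. Z \<in> carrier_mat n n \<Longrightarrow> Q * (P * Z) = Z"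
    proof -
      fix Z :: "'a mat" assume Z: "Z \<in> carrier_mat n n"
      have "Q * (P * Z) = (Q * P) * Z" using Q P Z by (simp add: assoc_mult_mat[of _ n n _ n _ n])
      then show "Q * (P * Z) = Z" using QP Z by simp
    qed
    have "Pm A (th # ths) = (P * X * Q) * (P * C * Q)"
      unfolding Pm.simps dA e1 Cons C_def X_def ..
    also have "\<dots> = P * (X * C) * Q"
      using P Q X C by (simp add: assoc_mult_mat[of _ n n _ n _ n] QPZ)
    finally show ?case unfolding Pm.simps dA C_def X_def .
  qed
qed

lemma trace_Pm:
  fixes A :: "real mat"
  assumes A: "A \<in> carrier_mat n n" and cp: "char_poly A = (\<Prod>e\<leftarrow>es. [:- e, 1:])"
  shows "mtr (Pm A ths) = (\<Sum>e\<leftarrow>es. \<Prod>th\<leftarrow>ths. e - th)"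
proof -
  obtain B P Q where sd: "schur_decomposition A es = (B, P, Q)" by (cases "schur_decomposition A es") auto
  from schur_decomposition[OF A cp sd] have wit: "similar_mat_wit A B P Q"
    and uB: "upper_triangular B" and dB: "diag_mat B = es" by auto
  from similar_mat_witD2[OF A wit] have
    B: "B \<in> carrier_mat n n" and P: "P \<in> carrier_mat n n" and Q: "Q \<in> carrier_mat n n"
    and QP: "Q * P = 1\<^sub>m n" by auto
  have PB: "Pm B ths \<in> carrier_mat n n" using B by (rule Pm_carrier)
  have "mtr (Pm A ths) = mtr (P * (Pm B ths * Q))"
    unfolding sim_Pm[OF wit A] using P PB Q by (simp add: assoc_mult_mat[of _ n n _ n _ n])
  also have "\<dots> = mtr ((Pm B ths * Q) * P)"
    using P PB Q by (intro mtr_comm[of _ n n]) auto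
  also have "\<dots> = mtr (Pm B ths)"
    using P PB Q QP by (simp add: assoc_mult_mat[of _ n n _ n _ n])
  also have "\<dots> = (\<Sum>i<n. \<Prod>th\<leftarrow>ths. B $$ (i, i) - th)"
    using Pm_ut[OF B uB, of ths] PB unfolding mtr_def by simp
  also have "\<dots> = (\<Sum>e\<leftarrow>es. \<Prod>th\<leftarrow>ths. e - th)"
  proof -
    have les: "length es = n" and ei: "\<And>i. i < n \<Longrightarrow> es ! i = B $$ (i, i)"
      using dB B unfolding diag_mat_def by auto
    show ?thesis unfolding sum_list_sum_nth using les ei by (simp add: atLeast0LessThan)
  qed
  finally show ?thesis .
qed

lemma kmat_of_real: "map_mat (of_real :: real \<Rightarrow> complex) (kmat p k) = kmat p k"
  by (rule eq_matI) (auto simp: kmat_def)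

lemma complex_eigen_theta:
  fixes v :: "complex vec" and a :: complex
  assumes v: "v \<in> carrier_vec (length (kneser_list p k))" "v \<noteq> 0\<^sub>v (length (kneser_list p k))"
    and ev: "kmat p k *\<^sub>v v = a \<cdot>\<^sub>v v"
  shows "\<exists>j\<le>k. a = theta p k j"
proof -
  let ?vs = "kneser_list p k"
  let ?N = "length ?vs"
  define f where "f B = (if B \<in> kneser_verts p k then v $ (SOME i. i < ?N \<and> ?vs ! i = B) else 0)" for B
  have fvs: "f (?vs ! i) = v $ i" if i: "i < ?N" for i
  proof -
    have ex: "\<exists>i'. i' < ?N \<and> ?vs ! i' = ?vs ! i" using i by blast
    have "(SOME i'. i' < ?N \<and> ?vs ! i' = ?vs ! i) = i"
    proof (rule someI2_ex[OF ex])
      fix i' assume "i' < ?N \<and> ?vs ! i' = ?vs ! i"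
      then show "i' = i" using kl_props i nth_eq_iff_index_eq by metis
    qed
    then show ?thesis using kl_mem[OF i] by (simp add: f_def)
  qed
  have vf: "vecf p k f = v" by (rule eq_vecI) (use v fvs in auto)
  have van: "\<And>B. B \<notin> kneser_verts p k \<Longrightarrow> f B = 0" by (simp add: f_def)
  have Af: "Aop p k f = (\<lambda>B. a * f B)"
  proof
    fix B show "Aop p k f B = a * f B"
    proof (cases "B \<in> kneser_verts p k")
      case True
      then obtain i where i: "i < ?N" "B = ?vs ! i" using kl_props in_set_conv_nth by metis
      have "vecf p k (Aop p k f) = a \<cdot>\<^sub>v vecf p k f" using kmat_vecf[of p k f] ev vf by simp
      then have "vecf p k (Aop p k f) $ i = (a \<cdot>\<^sub>v vecf p k f) $ i" by simp
      then show ?thesis using i by simp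
    next
      case False then show ?thesis by (simp add: Aop_def van)
    qed
  qed
  have "\<exists>i<?N. v $ i \<noteq> 0"
  proof (rule ccontr)
    assume "\<not> (\<exists>i<?N. v $ i \<noteq> 0)"
    then have "v = 0\<^sub>v ?N" using v(1) by (intro eq_vecI) auto
    with v(2) show False by simp
  qed
  then obtain i where i: "i < ?N" "v $ i \<noteq> 0" by blast
  define ths where "ths = (map (theta p k) [0..<Suc k] :: complex list)"
  have "Pop p k ths f = (\<lambda>B. (\<Prod>th\<leftarrow>ths. (a - th)) * f B)" by (rule Pop_eigen[OF Af])
  moreover have "Pop p k ths f = (\<lambda>_. 0)" unfolding ths_def by (rule Pop_annih[OF van])
  ultimately have "(\<Prod>th\<leftarrow>ths. (a - th)) * f (?vs ! i) = 0" by metis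
  then have "(\<Prod>th\<leftarrow>ths. (a - th)) = 0" using i fvs by simp
  then have "0 \<in> set (map (\<lambda>th. a - th) ths)" by (simp add: prod_list_zero_iff)
  then have "\<exists>j\<in>set [0..<Suc k]. a = theta p k j" unfolding ths_def by auto
  then show ?thesis by (metis atLeastLessThan_iff less_Suc_eq_le set_upt)
qed

lemma real_split:
  fixes A :: "real mat"
  assumes A: "A \<in> carrier_mat n n"
    and ev: "\<And>(a::complex) v. v \<in> carrier_vec n \<Longrightarrow> v \<noteq> 0\<^sub>v n \<Longrightarrow> map_mat (of_real :: real \<Rightarrow> complex) A *\<^sub>v v = a \<cdot>\<^sub>v v \<Longrightarrow> a \<in> of_real ` R"
  shows "\<exists>rs. char_poly A = (\<Prod>r\<leftarrow>rs. [:- r, 1:]) \<and> set rs \<subseteq> R"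
proof -
  let ?AC = "map_mat (of_real :: real \<Rightarrow> complex) A"
  have AC: "?AC \<in> carrier_mat n n" using A by simp
  obtain as where as: "char_poly ?AC = (\<Prod>a\<leftarrow>as. [:- a, 1:])" using char_poly_factorized[OF AC] by blast
  have asR: "a \<in> of_real ` R" if a: "a \<in> set as" for a
  proof -
    have "poly (char_poly ?AC) a = 0" unfolding as using a by (rule linear_poly_root)
    then have "eigenvalue ?AC a" using eigenvalue_root_char_poly[OF AC] by simp
    then obtain v where "eigenvector ?AC v a" unfolding eigenvalue_def by blast
    then have "v \<in> carrier_vec n" "v \<noteq> 0\<^sub>v n" "?AC *\<^sub>v v = a \<cdot>\<^sub>v v"
      using AC unfolding eigenvector_def by auto
    then show ?thesis by (rule ev)
  qed
  define rs where "rs = map Re as"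
  have "map (of_real \<circ> Re) as = as"
  proof (rule map_idI)
    fix a assume "a \<in> set as"
    then obtain r where "a = of_real r" using asR by blast
    then show "(of_real \<circ> Re) a = a" by simp
  qed
  then have asrs: "as = map of_real rs" unfolding rs_def by (simp add: map_map)
  interpret h: map_poly_comm_ring_hom "of_real :: real \<Rightarrow> complex" ..
  have "map_poly of_real (char_poly A) = char_poly ?AC" by (rule of_real_hom.char_poly_hom[OF A, symmetric])
  also have "\<dots> = (\<Prod>a\<leftarrow>as. [:- a, 1:])" by (rule as)
  also have "\<dots> = map_poly of_real (\<Prod>r\<leftarrow>rs. [:- r, 1:])"
    unfolding asrs h.hom_prod_list by (simp add: o_def)
  finally have eq: "map_poly (of_real :: real \<Rightarrow> complex) (char_poly A) = map_poly of_real (\<Prod>r\<leftarrow>rs. [:- r, 1:])" .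
  have "char_poly A = (\<Prod>r\<leftarrow>rs. [:- r, 1:])"
  proof (rule poly_eqI)
    fix i
    have "coeff (map_poly (of_real :: real \<Rightarrow> complex) (char_poly A)) i = coeff (map_poly of_real (\<Prod>r\<leftarrow>rs. [:- r, 1:])) i"
      using eq by simp
    then show "coeff (char_poly A) i = coeff (\<Prod>r\<leftarrow>rs. [:- r, 1:]) i"
      by (simp add: of_real_hom.coeff_map_poly_hom)
  qed
  moreover have "set rs \<subseteq> R" unfolding rs_def
  proof
    fix r assume "r \<in> set (map Re as)"
    then obtain a where a: "a \<in> set as" "r = Re a" by (metis imageE set_map)
    then obtain r' where r': "r' \<in> R" "a = of_real r'" using asR by blast
    have "r = r'" using a(2) r'(2) by simp
    then show "r \<in> R" using r' by simp
  qed
  ultimately show ?thesis by blast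
qed

lemma prod_lin_mset:
  fixes xs ys :: "'a::idom list"
  assumes "(\<Prod>x\<leftarrow>xs. [:- x, 1:]) = (\<Prod>y\<leftarrow>ys. [:- y, 1:])"
  shows "mset xs = mset ys"
  using assms
proof (induction xs arbitrary: ys)
  case Nil
  show ?case
  proof (cases ys)
    case (Cons y ys')
    have "poly (\<Prod>y\<leftarrow>ys. [:- y, 1:]) y = 0" using Cons by (intro linear_poly_root) simp
    moreover have "poly (\<Prod>y\<leftarrow>ys. [:- y, 1:]) y = 1" unfolding Nil[symmetric] by simp
    ultimately show ?thesis by simp
  qed simp
next
  case (Cons x xs)
  have "poly (\<Prod>y\<leftarrow>x#xs. [:- y, 1:]) x = 0" by (rule linear_poly_root) simp
  then have "poly (\<Prod>y\<leftarrow>ys. [:- y, 1:]) x = 0" unfolding Cons.prems .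
  then obtain y where "y \<in> set ys" "poly [:- y, 1:] x = 0" unfolding poly_prod_list_zero_iff by auto
  then have x: "x \<in> set ys" by simp
  have "(\<Prod>y\<leftarrow>ys. [:- y, 1:]) = [:- x, 1:] * (\<Prod>y\<leftarrow>remove1 x ys. [:- y, 1:])"
    by (rule prod_list_map_remove1[OF x])
  then have "[:- x, 1:] * (\<Prod>x\<leftarrow>xs. [:- x, 1:]) = [:- x, 1:] * (\<Prod>y\<leftarrow>remove1 x ys. [:- y, 1:])"
    using Cons.prems by (simp only: list.map prod_list.Cons)
  moreover have "[:- x, 1:] \<noteq> 0" by simp
  ultimately have "(\<Prod>x\<leftarrow>xs. [:- x, 1:]) = (\<Prod>y\<leftarrow>remove1 x ys. [:- y, 1:])" using mult_left_cancel by blast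
  then have "mset xs = mset (remove1 x ys)" by (rule Cons.IH)
  then show ?case using x by simp
qed

lemma prod_perm:
  fixes f :: "'a \<Rightarrow> 'b::comm_monoid_mult"
  assumes "mset xs = mset ys"
  shows "prod_list (map f xs) = prod_list (map f ys)"
proof -
  have "prod_list (map f xs) = prod_mset (mset (map f xs))" by (rule prod_mset_prod_list[symmetric])
  also have "mset (map f xs) = mset (map f ys)" using assms by simp
  also have "prod_mset (mset (map f ys)) = prod_list (map f ys)" by (rule prod_mset_prod_list)
  finally show ?thesis .
qed

lemma eigenvalues_desc_eq:
  assumes cp: "char_poly A = (\<Prod>r\<leftarrow>rs. [:- r, 1:])"
  shows "eigenvalues_desc A = rev (sort rs)"
  unfolding eigenvalues_desc_def
proof (rule the_equality)
  have "mset (rev (sort rs)) = mset rs" by simp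
  then have "(\<Prod>x\<leftarrow>rev (sort rs). [:- x, 1:]) = (\<Prod>r\<leftarrow>rs. [:- r, 1:])" by (rule prod_perm)
  moreover have "sorted_wrt (\<ge>) (rev (sort rs))" by (simp add: sorted_wrt_rev)
  ultimately show "sorted_wrt (\<ge>) (rev (sort rs)) \<and> char_poly A = (\<Prod>x\<leftarrow>rev (sort rs). [:- x, 1:])"
    using cp by simp
next
  fix mu assume mu: "sorted_wrt (\<ge>) mu \<and> char_poly A = (\<Prod>x\<leftarrow>mu. [:- x, 1:])"
  then have "mset mu = mset rs" using cp prod_lin_mset by metis
  then have "mset (rev mu) = mset rs" by simp
  moreover have "sorted (rev mu)" using mu by (simp add: sorted_wrt_rev)
  ultimately have "sort rs = rev mu" by (rule properties_for_sort)
  then show "mu = rev (sort rs)" by simp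
qed

lemma bin_step: "b \<le> a \<Longrightarrow> (a - 1) choose (b - 1) \<le> a choose b"
proof (cases "b = 0")
  case True then show ?thesis by simp
next
  case False
  assume ba: "b \<le> a"
  show ?thesis using False ba by (cases a; cases b) auto
qed

lemma bin_mono:
  assumes "b \<le> a" "i \<le> j"
  shows "(a - j) choose (b - j) \<le> (a - i) choose (b - i)"
  using assms(2)
proof (induction j rule: dec_induct)
  case base then show ?case by simp
next
  case (step j)
  have "(a - Suc j) choose (b - Suc j) = (a - j - 1) choose (b - j - 1)" by simp
  also have "\<dots> \<le> (a - j) choose (b - j)" using assms(1) by (intro bin_step) simp
  finally show ?case using step by simp
qed

lemma bin_strict:
  assumes "1 \<le> b" "b < a"
  shows "(a - 1) choose (b - 1) < a choose b"
proof -
  obtain a' b' where ab: "a = Suc a'" "b = Suc b'" using assms by (cases a; cases b) auto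
  have "b \<le> a'" using ab assms by simp
  then have "0 < a' choose b" by simp
  then show ?thesis using ab by simp
qed

lemma theta_0: "theta p k 0 = (of_nat ((p - k) choose k) :: 'a::field_char_0)"
  by (simp add: theta_def)

lemma theta_le_abs:
  "\<bar>theta p k j :: real\<bar> = real ((p - k - j) choose (k - j))"
  by (simp add: theta_def abs_mult)

lemma theta_le_d:
  assumes "k \<le> p - k"
  shows "(theta p k j :: real) \<le> real ((p - k) choose k)"
proof -
  have "(p - k - j) choose (k - j) \<le> (p - k - 0) choose (k - 0)"
    using assms by (intro bin_mono) auto
  then have "\<bar>theta p k j :: real\<bar> \<le> real ((p - k) choose k)" unfolding theta_le_abs by simp
  then show ?thesis by simp
qed

lemma theta_ne_d:
  assumes "2 * k < p" "1 \<le> k" "1 \<le> j"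
  shows "(theta p k j :: real) \<noteq> real ((p - k) choose k)"
proof -
  have "(p - k - j) choose (k - j) \<le> (p - k - 1) choose (k - 1)"
    using assms by (intro bin_mono) auto
  also have "\<dots> < (p - k) choose k" using assms by (intro bin_strict) auto
  finally have "\<bar>theta p k j :: real\<bar> < real ((p - k) choose k)" unfolding theta_le_abs by simp
  then show ?thesis by auto
qed

lemma theta_pos:
  assumes "2 \<le> k" "k \<le> p - k" "1 \<le> j" "(0::real) < theta p k j"
  shows "(theta p k j :: real) \<le> real ((p - k - 2) choose (k - 2))"
proof -
  have "even j"
  proof (rule ccontr)
    assume "odd j"
    then have "(theta p k j :: real) = - real ((p - k - j) choose (k - j))" by (simp add: theta_def)
    then show False using assms(4) by simp
  qed
  then have j2: "2 \<le> j" using assms(3) by presburger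
  have "(p - k - j) choose (k - j) \<le> (p - k - 2) choose (k - 2)"
    using assms j2 by (intro bin_mono) auto
  then have "\<bar>theta p k j :: real\<bar> \<le> real ((p - k - 2) choose (k - 2))" unfolding theta_le_abs by simp
  then show ?thesis by simp
qed

section \<open>Spectral facts\<close>

lemma kneser_split:
  "\<exists>rs. char_poly (kmat p k :: real mat) = (\<Prod>r\<leftarrow>rs. [:- r, 1:]) \<and> set rs \<subseteq> theta p k ` {0..k}"
proof (rule real_split[OF kmat_carrier])
  fix a :: complex and v
  assume v: "v \<in> carrier_vec (length (kneser_list p k))" "v \<noteq> 0\<^sub>v (length (kneser_list p k))"
    and ev: "map_mat of_real (kmat p k) *\<^sub>v v = a \<cdot>\<^sub>v v"
  from complex_eigen_theta[OF v] ev obtain j where "j \<le> k" "a = theta p k j"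
    unfolding kmat_of_real by blast
  moreover have "(theta p k j :: complex) = of_real (theta p k j)" by (simp add: theta_def)
  ultimately show "a \<in> of_real ` theta p k ` {0..k}" by auto
qed

lemma unit_vecf:
  assumes j: "j < length (kneser_list p k)"
  shows "vecf p k (wS p k (kneser_list p k ! j)) = (unit_vec (length (kneser_list p k)) j :: 'a::field_char_0 vec)"
proof (rule eq_vecI)
  fix i assume "i < dim_vec (unit_vec (length (kneser_list p k)) j :: 'a vec)"
  then have i: "i < length (kneser_list p k)" by simp
  have "(kneser_list p k ! j = kneser_list p k ! i) = (j = i)"
    using kl_props i j nth_eq_iff_index_eq by metis
  then show "vecf p k (wS p k (kneser_list p k ! j)) $ i = (unit_vec (length (kneser_list p k)) j :: 'a vec) $ i"
    using i j by (simp add: wS_on_verts kl_mem unit_vec_def)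
qed simp

lemma trace_kneser:
  assumes "2 * k \<le> p"
  shows "mtr (Pm (kmat p k :: real mat) (map (theta p k) [1..<Suc k])) =
         (\<Prod>th\<leftarrow>map (theta p k) [1..<Suc k]. real ((p - k) choose k) - th)"
proof -
  let ?vs = "kneser_list p k"
  let ?N = "length ?vs"
  let ?gs = "map (theta p k) [1..<Suc k] :: real list"
  let ?M = "Pm (kmat p k :: real mat) ?gs"
  let ?G = "(\<Prod>th\<leftarrow>?gs. real ((p - k) choose k) - th)"
  have M: "?M \<in> carrier_mat ?N ?N" by (rule Pm_carrier[OF kmat_carrier])
  have N0: "0 < ?N" using assms by (simp add: kl_len)
  have entry: "?M $$ (i, j) = ?M $$ (0, j)" if i: "i < ?N" and j: "j < ?N" for i j
  proof -
    have van: "\<And>B. B \<notin> kneser_verts p k \<Longrightarrow> wS p k (?vs ! j) B = (0::real)" by (simp add: wS_def)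
    obtain c where c: "\<forall>B\<in>kneser_verts p k. Pop p k ?gs (wS p k (?vs ! j)) B = c"
      using Pop_rank1[where p=p and k=k and f="wS p k (?vs ! j) :: nat set \<Rightarrow> real"] van by blast
    have col: "\<And>i'. i' < ?N \<Longrightarrow> ?M $$ (i', j) = Pop p k ?gs (wS p k (?vs ! j)) (?vs ! i')"
    proof -
      fix i' assume i': "i' < ?N"
      have "?M $$ (i', j) = (?M *\<^sub>v unit_vec ?N j) $ i'"
        using M i' j by (simp add: scalar_prod_right_unit)
      also have "\<dots> = vecf p k (Pop p k ?gs (wS p k (?vs ! j))) $ i'"
        unfolding unit_vecf[OF j, symmetric] Pm_vecf ..
      finally show "?M $$ (i', j) = Pop p k ?gs (wS p k (?vs ! j)) (?vs ! i')" using i' by simp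
    qed
    show ?thesis using col[OF i] col[OF N0] c kl_mem[OF i] kl_mem[OF N0] by simp
  qed
  have "mtr ?M = (\<Sum>i<?N. ?M $$ (0, i))"
    unfolding mtr_def using M entry by simp
  also have "\<dots> = (?M *\<^sub>v vecf p k (ind p k)) $ 0"
    using M N0 by (simp add: scalar_prod_def atLeast0LessThan ind_def kl_mem)
  also have "?M *\<^sub>v vecf p k (ind p k) = vecf p k (\<lambda>B. ?G * ind p k B)"
    unfolding Pm_vecf using Pop_eigen[OF Aop_ind, of k p ?gs] assms by simp
  also have "\<dots> $ 0 = ?G" using N0 by (simp add: ind_def kl_mem)
  finally show ?thesis .
qed

lemma sum_list_if_eq:
  fixes c :: real
  shows "sum_list (map (\<lambda>e. if e = d then c else 0) xs) = real (count_list xs d) * c"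
  by (induction xs) (auto simp: algebra_simps)

lemma count_d:
  assumes pk: "2 * k < p" "1 \<le> k"
    and cp: "char_poly (kmat p k :: real mat) = (\<Prod>e\<leftarrow>mu. [:- e, 1:])"
    and mus: "set mu \<subseteq> theta p k ` {0..k}"
  shows "count_list mu (real ((p - k) choose k)) = 1"
proof -
  let ?d = "real ((p - k) choose k)"
  let ?gs = "map (theta p k) [1..<Suc k] :: real list"
  let ?g = "\<lambda>e. \<Prod>th\<leftarrow>?gs. e - th"
  have "mtr (Pm (kmat p k :: real mat) ?gs) = (\<Sum>e\<leftarrow>mu. ?g e)"
    by (rule trace_Pm[OF kmat_carrier cp])
  also have "\<dots> = sum_list (map (\<lambda>e. if e = ?d then ?g ?d else 0) mu)"
  proof (rule arg_cong[where f = sum_list], rule map_cong[OF refl])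
    fix e assume "e \<in> set mu"
    then obtain j where j: "j \<le> k" "e = theta p k j" using mus by auto
    show "?g e = (if e = ?d then ?g ?d else 0)"
    proof (cases "j = 0")
      case True then show ?thesis using j by (simp add: theta_0)
    next
      case False
      have "j \<in> set [1..<Suc k]" using j False by auto
      then have "e \<in> set ?gs" using j(2) by (simp only: set_map) blast
      then have "?g e = 0" by (auto simp: prod_list_zero_iff)
      moreover have "e \<noteq> ?d" using j False theta_ne_d[OF pk, of j] by auto
      ultimately show ?thesis by simp
    qed
  qed
  also have "\<dots> = real (count_list mu ?d) * ?g ?d" by (rule sum_list_if_eq)
  finally have eq1: "mtr (Pm (kmat p k :: real mat) ?gs) = real (count_list mu ?d) * ?g ?d" .
  have eq2: "mtr (Pm (kmat p k :: real mat) ?gs) = ?g ?d" by (rule trace_kneser) (use pk in simp)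
  have "?g ?d \<noteq> 0"
  proof
    assume "?g ?d = 0"
    then have "0 \<in> set (map (\<lambda>th. ?d - th) ?gs)" by (simp add: prod_list_zero_iff)
    then have "\<exists>j\<in>set [1..<Suc k]. ?d = theta p k j" by auto
    then obtain j where "j \<in> set [1..<Suc k]" "?d = theta p k j" by blast
    then show False using theta_ne_d[OF pk, of j] by auto
  qed
  then show ?thesis using eq1 eq2 by simp
qed

lemma poly_ineq:
  fixes a k :: real
  assumes k2: "2 \<le> k" and ak: "k + 1 \<le> a"
  shows "(a + k)^2 * (k - 1) \<le> a^2 * (a - 1)^2"
proof -
  have a3: "3 \<le> a" using k2 ak by simp
  have "(a + k)^2 \<le> (2 * a - 1)^2" using ak k2 by (intro power_mono) auto
  moreover have "k - 1 \<le> a - 2" using ak by simp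
  ultimately have "(a + k)^2 * (k - 1) \<le> (2 * a - 1)^2 * (a - 2)"
    using k2 by (intro mult_mono) auto
  also have "\<dots> \<le> a^2 * (a - 1)^2"
  proof -
    define x where "x = a - 3"
    have x: "0 \<le> x" using a3 by (simp add: x_def)
    have "a^2 * (a - 1)^2 - (2 * a - 1)^2 * (a - 2) = x^4 + 6 * x^3 + 13 * x^2 + 15 * x + 11"
      unfolding x_def by (simp add: eval_nat_numeral algebra_simps)
    also have "\<dots> \<ge> 0" using x by simp
    finally show ?thesis by simp
  qed
  finally show ?thesis .
qed

lemma arith_main:
  fixes n d t W a k :: real
  assumes k2: "2 \<le> k" and ak: "k + 1 \<le> a" and W2: "2 \<le> W" and d: "0 < d" and t: "0 \<le> t"
    and F1: "k^2 * d \<le> (n - d) * (a - k + 1)"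
    and F2: "a - k + 1 \<le> k * (W - 1)"
    and F3: "k * W \<le> a + k"
    and F4: "t * (a * (a - 1)) = d * (k * (k - 1))"
  shows "d^2 + (W - 1) * t^2 \<le> n * d * (W - 1) / W"
proof -
  have akp: "0 < a - k + 1" using ak by simp
  have nd: "0 \<le> n - d"
  proof (rule ccontr)
    assume "\<not> 0 \<le> n - d"
    then have "(n - d) * (a - k + 1) < 0" using akp by (simp add: mult_neg_pos)
    moreover have "0 < k^2 * d" using k2 d by simp
    ultimately show False using F1 by simp
  qed
  have s2: "k * d \<le> (n - d) * (W - 1)"
  proof -
    have "k * (k * d) = k^2 * d" by (simp add: power2_eq_square)
    also have "\<dots> \<le> (n - d) * (a - k + 1)" by (rule F1)
    also have "\<dots> \<le> (n - d) * (k * (W - 1))" using nd F2 by (intro mult_left_mono)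
    also have "\<dots> = k * ((n - d) * (W - 1))" by simp
    finally show ?thesis using k2 by simp
  qed
  have aa: "0 < a * (a - 1)" using ak k2 by simp
  have s3: "W * t * (a * (a - 1)) \<le> (a + k) * (k - 1) * d"
  proof -
    have "W * t * (a * (a - 1)) = W * (t * (a * (a - 1)))" by (simp add: mult.assoc)
    also have "\<dots> = W * (d * (k * (k - 1)))" using F4 by simp
    also have "\<dots> = (k * W) * ((k - 1) * d)" by (simp add: algebra_simps)
    finally have "W * t * (a * (a - 1)) = (k * W) * ((k - 1) * d)" .
    also have "\<dots> \<le> (a + k) * ((k - 1) * d)" using F3 k2 d by (intro mult_right_mono) auto
    finally show ?thesis by (simp add: algebra_simps)
  qed
  have s5: "(W * t)^2 \<le> (k - 1) * d^2"
  proof -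
    have wt0: "0 \<le> W * t * (a * (a - 1))" using W2 t aa by simp
    have "(W * t * (a * (a - 1)))^2 \<le> ((a + k) * (k - 1) * d)^2"
      using s3 wt0 by (intro power_mono) auto
    also have "\<dots> = ((a + k)^2 * (k - 1)) * ((k - 1) * d^2)" by (simp add: power2_eq_square algebra_simps)
    also have "\<dots> \<le> (a^2 * (a - 1)^2) * ((k - 1) * d^2)"
      using poly_ineq[OF k2 ak] k2 by (intro mult_right_mono) auto
    finally have X: "(W * t * (a * (a - 1)))^2 \<le> (a^2 * (a - 1)^2) * ((k - 1) * d^2)" .
    define Q where "Q = (a * (a - 1))^2"
    have c1: "(W * t * (a * (a - 1)))^2 = (W * t)^2 * Q" unfolding Q_def by (simp only: power_mult_distrib)
    have c2: "(a^2 * (a - 1)^2) * ((k - 1) * d^2) = ((k - 1) * d^2) * Q"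
      unfolding Q_def by (simp only: power_mult_distrib mult.commute)
    have "(W * t)^2 * Q \<le> ((k - 1) * d^2) * Q" using X unfolding c1 c2 .
    moreover have "0 < Q" unfolding Q_def using aa by (intro zero_less_power) simp
    ultimately show ?thesis by (rule mult_right_le_imp_le)
  qed
  have s6: "W * (W - 1) * t^2 \<le> (k - 1) * d^2"
  proof -
    have "W * (W - 1) * t^2 \<le> W * W * t^2" using W2 by (intro mult_right_mono) auto
    also have "\<dots> = (W * t)^2" by (simp add: power2_eq_square)
    finally show ?thesis using s5 by simp
  qed
  have main: "W * (d^2 + (W - 1) * t^2) \<le> n * d * (W - 1)"
  proof -
    have "n * d * (W - 1) = d * (d * (W - 1)) + d * ((n - d) * (W - 1))" by (simp add: algebra_simps)
    also have "\<dots> \<ge> d * (d * (W - 1)) + d * (k * d)" using s2 d by simp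
    finally have "d * (d * (W - 1)) + d * (k * d) \<le> n * d * (W - 1)" .
    moreover have "W * (d^2 + (W - 1) * t^2) \<le> d * (d * (W - 1)) + d * (k * d)"
      using s6 by (simp add: power2_eq_square algebra_simps)
    ultimately show ?thesis by simp
  qed
  show ?thesis using main W2 by (simp add: pos_le_divide_eq mult.commute)
qed

lemma F1_nat:
  assumes "1 \<le> k" "k \<le> p"
  shows "((p - k) choose k) + k * ((p - k) choose (k - 1)) \<le> (p choose k)"
proof -
  let ?a = "p - k"
  have "(\<Sum>i\<in>{0,1}. (k choose i) * (?a choose (k - i))) \<le> (\<Sum>i\<le>k. (k choose i) * (?a choose (k - i)))"
    using assms by (intro sum_mono2) auto
  also have "\<dots> = (k + ?a) choose k" by (rule vandermonde)
  finally have le: "(\<Sum>i\<in>{0,1}. (k choose i) * (?a choose (k - i))) \<le> (k + ?a) choose k" .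
  have "(\<Sum>i\<in>{0,1}. (k choose i) * (?a choose (k - i))) = (?a choose k) + k * (?a choose (k - 1))" by simp
  with le have "(?a choose k) + k * (?a choose (k - 1)) \<le> (k + ?a) choose k" by simp
  moreover have "k + ?a = p" using assms by simp
  ultimately show ?thesis by simp
qed

lemma absorb_nat:
  assumes "1 \<le> k"
  shows "(a - (k - 1)) * (a choose (k - 1)) = k * (a choose k)"
proof -
  have "(a - (k - 1)) * (a choose (k - 1)) = a * ((a - 1) choose (k - 1))" by (rule binomial_absorb_comp)
  also have "\<dots> = Suc (k - 1) * (a choose Suc (k - 1))" by (rule binomial_absorption[symmetric])
  finally show ?thesis using assms by simp
qed

lemma F4_nat:
  assumes "2 \<le> k"
  shows "(a choose k) * (k * (k - 1)) = a * (a - 1) * ((a - 2) choose (k - 2))"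
proof -
  have e1: "k * (a choose k) = a * ((a - 1) choose (k - 1))" using assms by (intro times_binomial_minus1_eq) simp
  have e2: "(k - 1) * ((a - 1) choose (k - 1)) = (a - 1) * ((a - 1 - 1) choose (k - 1 - 1))"
    using assms by (intro times_binomial_minus1_eq) simp
  have "(a choose k) * (k * (k - 1)) = (k - 1) * (k * (a choose k))" by (simp add: algebra_simps)
  also have "\<dots> = a * ((k - 1) * ((a - 1) choose (k - 1)))" unfolding e1 by (simp add: algebra_simps)
  also have "\<dots> = a * (a - 1) * ((a - 2) choose (k - 2))" unfolding e2 by (simp add: algebra_simps numeral_2_eq_2)
  finally show ?thesis .
qed

section \<open>Clique number\<close>

lemma clique_bound:
  assumes "kneser_clique p k C" "1 \<le> k"
  shows "card C * k \<le> p"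
proof -
  have CV: "C \<subseteq> kneser_verts p k" using assms unfolding kneser_clique_def by simp
  have fC: "finite C" using CV finite_subset kv_finite by blast
  have pw: "pairwise disjnt C" using assms unfolding kneser_clique_def pairwise_def disjnt_def by blast
  have "card (\<Union>C) = sum card C" using pw CV kv_fin_el by (intro card_Union_disjoint) auto
  also have "\<dots> = card C * k" using CV by (simp add: kv_mem subset_iff)
  finally have "card (\<Union>C) = card C * k" .
  moreover have "\<Union>C \<subseteq> {0..<p}"
  proof
    fix x assume "x \<in> \<Union>C"
    then obtain X where X: "X \<in> C" "x \<in> X" by blast
    then have "X \<in> kneser_verts p k" using CV by blast
    then have "X \<subseteq> {0..<p}" by (simp add: kv_mem)
    then show "x \<in> {0..<p}" using X by blast
  qed
  then have "card (\<Union>C) \<le> p" using card_mono[of "{0..<p}"] by fastforce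
  ultimately show ?thesis by simp
qed

lemma clique_exists:
  assumes "1 \<le> k"
  shows "\<exists>C. kneser_clique p k C \<and> card C = p div k"
proof -
  define blk where "blk i = {i * k..<i * k + k}" for i
  define C where "C = blk ` {0..<p div k}"
  have bnd: "i * k + k \<le> p" if "i < p div k" for i
  proof -
    have "i * k + k = Suc i * k" by simp
    also have "\<dots> \<le> (p div k) * k" using that by (intro mult_right_mono) auto
    also have "\<dots> \<le> p" by simp
    finally show ?thesis .
  qed
  have dis: "blk i \<inter> blk j = {}" if "i \<noteq> j" for i j
  proof (cases "i < j")
    case True
    then have "i * k + k \<le> j * k" by (metis Suc_leI add.commute mult_Suc mult_le_mono1)
    then show ?thesis by (auto simp: blk_def)
  next
    case False
    then have "j < i" using that by simp
    then have "j * k + k \<le> i * k" by (metis Suc_leI add.commute mult_Suc mult_le_mono1)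
    then show ?thesis by (auto simp: blk_def)
  qed
  have inj: "inj_on blk {0..<p div k}"
  proof (rule inj_onI)
    fix i j assume "blk i = blk j"
    moreover have "blk i \<noteq> {}" using assms by (auto simp: blk_def)
    ultimately show "i = j" using dis by blast
  qed
  have "kneser_clique p k C"
    unfolding kneser_clique_def C_def
  proof (intro conjI ballI impI subsetI)
    fix B assume "B \<in> blk ` {0..<p div k}"
    then obtain i where i: "i < p div k" "B = blk i" by auto
    show "B \<in> kneser_verts p k" unfolding kv_mem using i bnd[OF i(1)] by (auto simp: blk_def)
  next
    fix A B assume "A \<in> blk ` {0..<p div k}" "B \<in> blk ` {0..<p div k}" "A \<noteq> B"
    then obtain i j where "A = blk i" "B = blk j" "i \<noteq> j" by blast
    then show "A \<inter> B = {}" using dis by simp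
  qed
  moreover have "card C = p div k" unfolding C_def using inj by (simp add: card_image)
  ultimately show ?thesis by blast
qed

lemma omega_eq:
  assumes "1 \<le> k"
  shows "kneser_clique_number p k = p div k"
proof -
  let ?S = "{card C | C. kneser_clique p k C}"
  have le: "x \<le> p div k" if "x \<in> ?S" for x
  proof -
    obtain C where C: "x = card C" "kneser_clique p k C" using \<open>x \<in> ?S\<close> by blast
    have "card C * k \<le> p" by (rule clique_bound[OF C(2) assms])
    then show ?thesis using C assms by (simp add: less_eq_div_iff_mult_less_eq)
  qed
  have fin: "finite ?S"
  proof (rule finite_subset[of _ "{0..p div k}"])
    show "?S \<subseteq> {0..p div k}"
    proof
      fix x assume "x \<in> ?S"
      then show "x \<in> {0..p div k}" using le by simp
    qed
  qed simp
  obtain C0 where C0: "kneser_clique p k C0" "card C0 = p div k" using clique_exists[OF assms] by blast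
  have mem: "p div k \<in> ?S" using C0 by (intro CollectI exI[of _ C0]) simp
  show ?thesis unfolding kneser_clique_number_def by (rule Max_eqI[OF fin le mem])
qed

section \<open>Edges\<close>

lemma card2: "card {a, b} \<le> 2"
  by (cases "a = b") auto

lemma edges_bound:
  assumes "1 \<le> k" "2 * k \<le> p"
  shows "(p choose k) * ((p - k) choose k) \<le> 2 * kneser_edges p k"
proof -
  let ?V = "kneser_verts p k"
  let ?P = "Sigma ?V (\<lambda>A. {B\<in>?V. A \<inter> B = {}})"
  let ?E = "{{A, B} | A B. A \<in> ?V \<and> B \<in> ?V \<and> A \<noteq> B \<and> A \<inter> B = {}}"
  have cP: "card ?P = (p choose k) * ((p - k) choose k)"
  proof -
    have "card ?P = (\<Sum>A\<in>?V. card {B\<in>?V. A \<inter> B = {}})" by (rule card_SigmaI) auto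
    also have "\<dots> = (\<Sum>A\<in>?V. (p - k) choose k)"
    proof (rule sum.cong[OF refl])
      fix A assume A: "A \<in> ?V"
      have "{B\<in>?V. A \<inter> B = {}} = {B. B \<subseteq> {0..<p} - A \<and> card B = k}" by (auto simp: kv_mem)
      moreover have "card ({0..<p} - A) = p - k" using A kv_fin_el[OF A] by (simp add: kv_mem card_Diff_subset)
      ultimately show "card {B\<in>?V. A \<inter> B = {}} = (p - k) choose k" using n_subsets[of "{0..<p} - A" k] by simp
    qed
    finally show ?thesis by (simp add: kv_card)
  qed
  have fP: "finite ?P" by (intro finite_SigmaI kv_finite) simp
  have fE: "finite ?E"
  proof (rule finite_subset[of _ "Pow ?V"])
    show "?E \<subseteq> Pow ?V"
    proof
      fix e assume "e \<in> ?E"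
      then obtain A B where "e = {A, B}" "A \<in> ?V" "B \<in> ?V" by blast
      then show "e \<in> Pow ?V" by simp
    qed
  qed simp
  define F where "F e = {x \<in> ?P. {fst x, snd x} = e}" for e
  have fF: "finite (F e)" for e by (rule finite_subset[OF _ fP]) (simp add: F_def)
  have PU: "?P \<subseteq> (\<Union>e\<in>?E. F e)"
  proof
    fix x assume x: "x \<in> ?P"
    obtain A B where AB: "x = (A, B)" by (cases x)
    have A: "A \<in> ?V" "B \<in> ?V" "A \<inter> B = {}" using x unfolding AB by simp_all
    have "card A = k" using A by (simp add: kv_mem)
    then have "A \<noteq> {}" using assms by auto
    then have neq: "A \<noteq> B" using A by auto
    have eE: "{A, B} \<in> ?E" by (rule CollectI, rule exI[of _ A], rule exI[of _ B]) (use A neq in simp)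
    have "x \<in> F {A, B}" using x AB by (simp add: F_def)
    then show "x \<in> (\<Union>e\<in>?E. F e)" by (rule UN_I[OF eE])
  qed
  have F2: "card (F e) \<le> 2" if eE: "e \<in> ?E" for e
  proof -
    obtain X Y where e: "e = {X, Y}" using eE by blast
    have sub: "F e \<subseteq> {(X, Y), (Y, X)}"
    proof
      fix x assume xF: "x \<in> F e"
      obtain A B where AB: "x = (A, B)" by (cases x)
      have "{A, B} = {X, Y}" using xF unfolding AB F_def e by simp
      then have "(A = X \<and> B = Y) \<or> (A = Y \<and> B = X)" by (rule doubleton_eq_iff[THEN iffD1])
      then show "x \<in> {(X, Y), (Y, X)}" unfolding AB by blast
    qed
    have "card (F e) \<le> card {(X, Y), (Y, X)}" by (rule card_mono[OF _ sub]) simp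
    also have "\<dots> \<le> 2" by (rule card2)
    finally show ?thesis .
  qed
  have "card ?P \<le> card (\<Union>e\<in>?E. F e)"
    by (rule card_mono[OF finite_UN_I[OF fE fF] PU])
  also have "\<dots> \<le> (\<Sum>e\<in>?E. card (F e))" by (rule card_UN_le[OF fE])
  also have "\<dots> \<le> (\<Sum>e\<in>?E. 2)" by (rule sum_mono[OF F2])
  also have "\<dots> = 2 * card ?E" by simp
  finally show ?thesis unfolding cP kneser_edges_def .
qed

lemma sorted_pos:
  fixes mu :: "real list"
  assumes s: "sorted_wrt (\<ge>) mu" and i: "i < length (filter (\<lambda>x. x > 0) mu)"
  shows "0 < mu ! i"
proof (rule ccontr)
  assume neg: "\<not> 0 < mu ! i"
  have "length (filter (\<lambda>x. x > 0) mu) \<le> length mu" by (rule length_filter_le)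
  then have il: "i < length mu" using i by linarith
  have "\<forall>x\<in>set (drop i mu). \<not> 0 < x"
  proof
    fix x assume "x \<in> set (drop i mu)"
    then obtain m where m: "m < length (drop i mu)" "x = drop i mu ! m" by (auto simp: in_set_conv_nth)
    then have x: "x = mu ! (i + m)" "i + m < length mu" by auto
    show "\<not> 0 < x"
    proof (cases "m = 0")
      case True then show ?thesis using x neg by simp
    next
      case False
      then have "mu ! (i + m) \<le> mu ! i" using sorted_wrt_nth_less[OF s, of i "i + m"] x by simp
      then show ?thesis using x neg by simp
    qed
  qed
  then have "filter (\<lambda>x. x > 0) (drop i mu) = []" by (simp add: filter_empty_conv)
  then have "length (filter (\<lambda>x. x > 0) mu) = length (filter (\<lambda>x. x > 0) (take i mu))"
    by (metis append_Nil2 append_take_drop_id filter_append)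
  also have "\<dots> \<le> length (take i mu)" by (rule length_filter_le)
  also have "\<dots> = i" using il by simp
  finally show False using i by simp
qed

lemma main_bound:
  fixes p k :: nat
  assumes k2: "k \<ge> 2" and pk: "p \<ge> 2 * k"
  defines "mu \<equiv> eigenvalues_desc (kneser_adj p k)"
  defines "l \<equiv> min (length (filter (\<lambda>x. x > 0) mu)) (kneser_clique_number p k)"
  shows "(\<Sum>i<l. (mu ! i)^2) \<le> 2 * real (kneser_edges p k) * (real (kneser_clique_number p k) - 1) / real (kneser_clique_number p k)"
proof -
  have k1: "1 \<le> k" using k2 by simp
  obtain rs where rs: "char_poly (kmat p k :: real mat) = (\<Prod>r\<leftarrow>rs. [:- r, 1:])" "set rs \<subseteq> theta p k ` {0..k}"
    using kneser_split by blast
  have mu_eq: "mu = rev (sort rs)" unfolding mu_def kneser_adj_kmat by (rule eigenvalues_desc_eq[OF rs(1)])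
  have "mset mu = mset rs" unfolding mu_eq by simp
  then have cpmu: "char_poly (kmat p k :: real mat) = (\<Prod>r\<leftarrow>mu. [:- r, 1:])" using rs(1) prod_perm by metis
  have mus: "set mu \<subseteq> theta p k ` {0..k}" using rs(2) mu_eq by simp
  have smu: "sorted_wrt (\<ge>) mu" unfolding mu_eq by (simp add: sorted_wrt_rev)
  define W where "W = kneser_clique_number p k"
  define m where "m = kneser_edges p k"
  have om: "W = p div k" using omega_eq[OF k1] by (simp add: W_def)
  have om2: "2 \<le> W" unfolding om using pk k1 by (simp add: less_eq_div_iff_mult_less_eq mult.commute)
  have lW: "l \<le> W" unfolding l_def W_def by simp
  have lpos: "\<And>i. i < l \<Longrightarrow> 0 < mu ! i" using sorted_pos[OF smu] unfolding l_def by auto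
  have "length (filter (\<lambda>x. x > 0) mu) \<le> length mu" by (rule length_filter_le)
  then have llen: "l \<le> length mu" unfolding l_def by linarith
  have edges: "real (p choose k) * real ((p - k) choose k) \<le> 2 * real m"
  proof -
    have "(p choose k) * ((p - k) choose k) \<le> 2 * m" unfolding m_def by (rule edges_bound[OF k1 pk])
    then show ?thesis by (metis of_nat_le_iff of_nat_mult of_nat_numeral)
  qed
  have Wpos: "0 < real W" using om2 by simp
  have RHS0: "0 \<le> 2 * real m * (real W - 1) / real W" using om2 by simp
  show ?thesis
  proof (cases "p = 2 * k")
    case True
    have sq1: "e^2 = 1" if "e \<in> set mu" for e
    proof -
      obtain j where j: "j \<le> k" "e = theta p k j" using mus \<open>e \<in> set mu\<close> by auto
      have "e = (-1)^j" using j True by (simp add: theta_def)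
      then show ?thesis by (simp add: power_mult[symmetric] mult.commute)
    qed
    have "(\<Sum>i<l. (mu ! i)^2) = (\<Sum>i<l. 1)"
      using llen sq1 by (intro sum.cong) auto
    also have "\<dots> = real l" by simp
    also have "\<dots> \<le> 2" using lW om True k1 by simp
    also have "2 \<le> real m"
    proof -
      have "(real (2 * k) / real k)^k \<le> real ((2 * k) choose k)" by (rule binomial_ge_n_over_k_pow_k) simp
      then have a: "(2::real)^k \<le> real ((2 * k) choose k)" using k1 by simp
      have b: "(2::real)^2 \<le> 2^k" using k2 by (intro power_increasing) auto
      have "(2::real)^2 \<le> real ((2 * k) choose k)" using order_trans[OF b a] .
      then have "4 \<le> real ((2 * k) choose k)" by (simp only: power2_eq_square)
      then have "4 \<le> real (p choose k)" using True by simp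
      moreover have "real ((p - k) choose k) = 1" using True by simp
      ultimately show ?thesis using edges by simp
    qed
    also have "real m = 2 * real m * (real W - 1) / real W" using om True k1 by simp
    finally show ?thesis unfolding W_def m_def .
  next
    case False
    then have pk': "2 * k < p" using pk by simp
    define d where "d = real ((p - k) choose k)"
    define t where "t = real ((p - k - 2) choose (k - 2))"
    have kpk: "k \<le> p - k" using pk by simp
    have cnt: "count_list mu d = 1" unfolding d_def by (rule count_d[OF pk' k1 cpmu mus])
    have allle: "e \<le> d" if "e \<in> set mu" for e
    proof -
      obtain j where j: "j \<le> k" "e = theta p k j" using mus \<open>e \<in> set mu\<close> by auto
      then show ?thesis unfolding d_def using theta_le_d[OF kpk] by simp
    qed
    have dmem: "d \<in> set mu" using cnt count_list_0_iff[of mu d] by auto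
    then obtain m' where m': "m' < length mu" "mu ! m' = d" by (auto simp: in_set_conv_nth)
    have ne: "mu \<noteq> []" using dmem by auto
    have mu0: "mu ! 0 = d"
    proof -
      have "mu ! 0 \<le> d" using allle ne by simp
      moreover have "d \<le> mu ! 0"
      proof (cases "m' = 0")
        case True then show ?thesis using m' by simp
      next
        case False then show ?thesis using sorted_wrt_nth_less[OF smu, of 0 m'] m' by simp
      qed
      ultimately show ?thesis by simp
    qed
    obtain rest where mu_split: "mu = d # rest" using ne mu0 by (cases mu) auto
    have "count_list rest d = 0" using cnt mu_split by simp
    then have dnot: "d \<notin> set rest" by (simp add: count_list_0_iff)
    have other: "(mu ! i)^2 \<le> t^2" if i: "1 \<le> i" "i < l" for i
    proof -
      have il: "i < length mu" using i llen by simp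
      have "mu ! i = rest ! (i - 1)" using i mu_split by (cases i) auto
      moreover have "i - 1 < length rest" using il i mu_split by auto
      ultimately have "mu ! i \<in> set rest" by simp
      then have nd: "mu ! i \<noteq> d" using dnot by auto
      have "mu ! i \<in> set mu" using il by simp
      then obtain j where j: "j \<le> k" "mu ! i = theta p k j" using mus by auto
      have "j \<noteq> 0"
      proof
        assume "j = 0"
        then have "mu ! i = d" using j by (simp add: theta_def d_def)
        with nd show False by simp
      qed
      then have "mu ! i \<le> t" unfolding t_def j(2) using theta_pos[OF k2 kpk, of j] lpos[OF i(2)] j by simp
      moreover have "0 < mu ! i" by (rule lpos[OF i(2)])
      ultimately show ?thesis by (intro power_mono) auto
    qed
    have sum_le: "(\<Sum>i<l. (mu ! i)^2) \<le> d^2 + (real W - 1) * t^2"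
    proof (cases l)
      case 0
      then show ?thesis using om2 by simp
    next
      case (Suc l')
      have "(\<Sum>i<l. (mu ! i)^2) = (mu ! 0)^2 + (\<Sum>i<l'. (mu ! Suc i)^2)"
        unfolding Suc by (rule sum.lessThan_Suc_shift)
      also have "(\<Sum>i<l'. (mu ! Suc i)^2) \<le> of_nat (card {..<l'}) * t^2"
        by (rule sum_bounded_above) (use other Suc in auto)
      also have "of_nat (card {..<l'}) * t^2 \<le> (real W - 1) * t^2"
        using lW Suc by (intro mult_right_mono) auto
      finally show ?thesis using mu0 by simp
    qed
    have d0: "0 < d" unfolding d_def using kpk by simp
    have arith: "d^2 + (real W - 1) * t^2 \<le> real (p choose k) * d * (real W - 1) / real W"
    proof (rule arith_main[where a = "real (p - k)" and k = "real k"])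
      show "2 \<le> real k" using k2 by simp
      show "real k + 1 \<le> real (p - k)" using pk' by simp
      show "2 \<le> real W" using om2 by simp
      show "0 < d" by (rule d0)
      show "0 \<le> t" by (simp add: t_def)
      show "(real k)^2 * d \<le> (real (p choose k) - d) * (real (p - k) - real k + 1)"
      proof -
        have f1: "real ((p - k) choose k) + real k * real ((p - k) choose (k - 1)) \<le> real (p choose k)"
          using F1_nat[OF k1, of p] pk by (metis of_nat_add of_nat_le_iff of_nat_mult le_add2 le_trans mult_2)
        have ab: "real (p - k - (k - 1)) * real ((p - k) choose (k - 1)) = real k * d"
          unfolding d_def using absorb_nat[OF k1, of "p - k"] by (metis of_nat_mult)
        have ab': "real (p - k - (k - 1)) = real (p - k) - real k + 1" using pk' k1 by (simp add: of_nat_diff)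
        have pos: "0 \<le> real (p - k) - real k + 1" using pk' by simp
        have "(real k)^2 * d = real k * (real k * d)" by (simp add: power2_eq_square)
        also have "\<dots> = real k * (real (p - k - (k - 1)) * real ((p - k) choose (k - 1)))"
          by (simp only: ab)
        also have "\<dots> = real k * real ((p - k) choose (k - 1)) * (real (p - k) - real k + 1)"
          by (simp only: ab' mult.assoc mult.commute mult.left_commute)
        also have "\<dots> \<le> (real (p choose k) - d) * (real (p - k) - real k + 1)"
          using f1 pos unfolding d_def by (intro mult_right_mono) auto
        finally show ?thesis .
      qed
      show "real (p - k) - real k + 1 \<le> real k * (real W - 1)"
      proof -
        have "p = k * (p div k) + p mod k" by simp
        moreover have "p mod k < k" using k1 by simp
        ultimately have "p + 1 \<le> k * W + k" unfolding om by linarith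
        then have "real p + 1 \<le> real k * real W + real k" by (metis of_nat_add of_nat_le_iff of_nat_mult of_nat_1)
        then show ?thesis using pk by (simp add: of_nat_diff algebra_simps)
      qed
      show "real k * real W \<le> real (p - k) + real k"
      proof -
        have "k * W \<le> p" unfolding om by (simp add: mult.commute)
        then have "real k * real W \<le> real p" by (metis of_nat_le_iff of_nat_mult)
        then show ?thesis using pk by (simp add: of_nat_diff)
      qed
      show "t * (real (p - k) * (real (p - k) - 1)) = d * (real k * (real k - 1))"
      proof -
        have "((p - k) choose k) * (k * (k - 1)) = (p - k) * (p - k - 1) * ((p - k - 2) choose (k - 2))"
          by (rule F4_nat[OF k2])
        then have "real ((p - k) choose k) * (real k * real (k - 1)) = real (p - k) * real (p - k - 1) * real ((p - k - 2) choose (k - 2))"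
          by (metis of_nat_mult)
        moreover have c1: "real (k - 1) = real k - 1" using k1 by (simp add: of_nat_diff)
        moreover have c2: "real (p - k - 1) = real (p - k) - 1" using pk' by (simp add: of_nat_diff)
        ultimately have X': "d * (real k * (real k - 1)) = real (p - k) * (real (p - k) - 1) * t"
          unfolding d_def t_def by (simp only:)
        show ?thesis by (simp only: X') (rule mult.commute)
      qed
    qed
    have fin: "real (p choose k) * d * (real W - 1) / real W \<le> 2 * real m * (real W - 1) / real W"
      using edges om2 unfolding d_def by (intro divide_right_mono mult_right_mono) auto
    show ?thesis using sum_le arith fin unfolding W_def m_def by linarith
  qed
qed

theorem mainTheorem2:
  fixes p k :: nat
  assumes "k \<ge> 2" and "p \<ge> 2 * k"
  shows "let mu = eigenvalues_desc (kneser_adj p k);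
             m = kneser_edges p k;
             \<omega> = kneser_clique_number p k;
             npos = length (filter (\<lambda>x. x > 0) mu);
             l = min npos \<omega>
         in (\<Sum>i<l. (mu ! i)^2) \<le> 2 * real m * (real \<omega> - 1) / real \<omega>"
  using main_bound[OF assms] unfolding Let_def .

end
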